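(* Let $\mathcal{A}=\langle\Sigma,Q_\mathcal{A},q^0_\mathcal{A},\delta_\mathcal{A},\alpha_\mathcal{A}\rangle$ be a nice GFG-tNCW, let $\mathcal{S}$ be any frontier of $\mathcal{A}$, let $\mathcal{B}_\mathcal{S}$ be the automaton constructed from $\mathcal{A}$ and $\mathcal{S}$ (with any admissible choice of initial state), and let $\mathcal{C}$ be the quotient automaton constructed from $\mathcal{B}_\mathcal{S}$, as described in the context. Then $\mathcal{C}$ is $\alpha$-maximal up to homogeneity.
   Context: A tNCW is $\mathcal{A}=\langle\Sigma,Q,q_0,\delta,\alpha\rangle$: finite alphabet $\Sigma$, finite state set $Q$, initial state $q_0$, transition function $\delta:Q\times\Sigma\to 2^Q\setminus\{\emptyset\}$ with transition relation $\Delta=\{\langle q,\sigma,s\rangle:s\in\delta(q,\sigma)\}$, and $\alpha\subseteq\Delta$. $\alpha$-transitions are those in $\alpha$, $\bar\alpha$-transitions those in $\Delta\setminus\alpha$; $\delta^{\alpha}(q,\sigma)$, $\delta^{\bar\alpha}(q,\sigma)$ denote the $\sigma$-successors via $\alpha$-, resp. $\bar\alpha$-transitions. A run on $w=\sigma_1\sigma_2\cdots$ is $r_0r_1\cdots$ with $r_0=q_0$, $r_{i+1}\in\delta(r_i,\sigma_{i+1})$; accepting iff it traverses $\alpha$-transitions finitely often; $L(\mathcal{A})$ the accepted language. $\mathcal{A}^q$ is $\mathcal{A}$ with initial state $q$; $q\sim_\mathcal{A}s$ iff $L(\mathcal{A}^q)=L(\mathcal{A}^s)$. GFG: there is $f:\Sigma^*\to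 Q$ with $f(\epsilon)=q_0$, $\langle f(u),\sigma,f(u\sigma)\rangle\in\Delta$, and $f$'s run on every $w\in L(\mathcal{A})$ accepting; $q$ is GFG if $\mathcal{A}^q$ is. Semantically deterministic: all $\sigma$-successors of a state pairwise $\sim$; safe deterministic: $|\delta^{\bar\alpha}(q,\sigma)|\le 1$; normal: a $\bar\alpha$-path from $q$ to $s$ implies one from $s$ to $q$. Nice: all states reachable and GFG, normal, safe deterministic, semantically deterministic. Safe components: SCCs of the graph with edges $q\to q'$ iff $q'\in\delta^{\bar\alpha}(q,\sigma)$ for some $\sigma$; $\mathbb{S}(\mathcal{A})$ denotes their set. A run is safe if it uses no $\alpha$-transition; $L_{safe}(\mathcal{A}^q)$ is the set of words with a safe run from $q$. $q\approx_\mathcal{A}s$ iff $q\sim s$ and $L_{safe}(\mathcal{A}^q)=L_{safe}(\mathcal{A}^s)$; $q\precsim s$ iff $q\sim s$ and $L_{safe}(\mathcal{A}^q)\subseteq L_{safe}(\mathcal{A}^s)$. $\alpha$-homogenous: for all $q,\sigma$, $\delta^{\alpha}(q,\sigma)=\emptyset$ or $\delta^{\bar\alpha}(q,\sigma)=\emptyset$. An allowed transition of $\mathcal{A}$ is a triple $\langle q,\sigma,s\rangle\in Q\times\Sigma\times Q$ such that some $s'\sim s$ has $\langle q,\sigma,s'\rangle\in\Delta$. $\mathcal{A}$ is $\alpha$-maximal up to homogeneity if it is $\alpha$-homogenous and for every $q,\sigma$ with $\delta^{\bar\alpha}(q,\sigma)=\emptyset$ all allowed transitions in $\{q\}\times\{\sigma\}\times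 Q$ are in $\Delta$. Construction (Step 1): define $H\subseteq\mathbb{S}(\mathcal{A})^2$ by $H(S,S')$ iff there are $q\in S$, $q'\in S'$ with $q\precsim q'$. A set $\mathcal{S}\subseteq\mathbb{S}(\mathcal{A})$ is a frontier if for every $S\in\mathbb{S}(\mathcal{A})$ there is $S'\in\mathcal{S}$ with $H(S,S')$, and for distinct $S,S'\in\mathcal{S}$, neither $H(S,S')$ nor $H(S',S)$. Given a frontier $\mathcal{S}$, $\mathcal{B}_\mathcal{S}=\langle\Sigma,Q_\mathcal{S},q^0_\mathcal{S},\delta_\mathcal{S},\alpha_\mathcal{S}\rangle$ where $Q_\mathcal{S}$ is the union of the components in $\mathcal{S}$; $q^0_\mathcal{S}=q^0_\mathcal{A}$ if $q^0_\mathcal{A}\in Q_\mathcal{S}$, and otherwise $q^0_\mathcal{S}$ is some $q'\in Q_\mathcal{S}$ with $q^0_\mathcal{A}\precsim q'$; for $q\in Q_\mathcal{S}$ and $\sigma\in\Sigma$: if $\delta^{\bar\alpha}_\mathcal{A}(q,\sigma)\ne\emptyset$ then $\delta^{\bar\alpha}_\mathcal{S}(q,\sigma)=\delta^{\bar\alpha}_\mathcal{A}(q,\sigma)$ and $\delta^{\alpha}_\mathcal{S}(q,\sigma)=\emptyset$; otherwise $\delta^{\bar\alpha}_\mathcal{S}(q,\sigma)=\emptyset$ and $\delta^{\alpha}_\mathcal{S}(q,\sigma)=\{q'\in Q_\mathcal{S}:\exists q''\in\delta^\alpha_\mathcal{A}(q,\sigma),\ q'\sim_\mathcal{A}q''\}$.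 (Step 2): for $\mathcal{B}=\mathcal{B}_\mathcal{S}$ with states $Q$, initial state $q_0$, let $[q]=\{q':q\approx_\mathcal{B}q'\}$ and $\mathcal{C}=\langle\Sigma,\{[q]:q\in Q\},[q_0],\delta_\mathcal{C},\alpha_\mathcal{C}\rangle$, where $\langle[q],\sigma,[p]\rangle\in\Delta_\mathcal{C}$ iff there are $q'\in[q]$, $p'\in[p]$ with $\langle q',\sigma,p'\rangle\in\Delta_\mathcal{B}$, and such a transition is in $\alpha_\mathcal{C}$ iff $\langle q',\sigma,p'\rangle\in\alpha_\mathcal{B}$ (this is independent of the choice of $q',p'$). *)

theory Defs
  imports Main
begin

record ('a, 'q) tncw =
  alph   :: "'a set"
  states :: "'q set"
  init   :: 'q
  trans  :: "('q \<times> 'a \<times> 'q) set"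
  acc    :: "('q \<times> 'a \<times> 'q) set"

definition wf_tncw :: "('a, 'q) tncw \<Rightarrow> bool" where
  "wf_tncw A \<longleftrightarrow> finite (alph A) \<and> finite (states A) \<and> init A \<in> states A
     \<and> trans A \<subseteq> states A \<times> alph A \<times> states A
     \<and> (\<forall>q\<in>states A. \<forall>\<sigma>\<in>alph A. \<exists>s. (q, \<sigma>, s) \<in> trans A)
     \<and> acc A \<subseteq> trans A"

definition safe_trans :: "('a, 'q) tncw \<Rightarrow> ('q \<times> 'a \<times> 'q) set" where
  "safe_trans A = trans A - acc A"

definition succ_acc :: "('a, 'q) tncw \<Rightarrow> 'q \<Rightarrow> 'a \<Rightarrow> 'q set" where
  "succ_acc A q \<sigma> = {s. (q, \<sigma>, s) \<in> acc A}"

definition succ_safe :: "('a, 'q) tncw \<Rightarrow> 'q \<Rightarrow> 'a \<Rightarrow> 'q set" where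
  "succ_safe A q \<sigma> = {s. (q, \<sigma>, s) \<in> safe_trans A}"

definition is_word :: "('a, 'q) tncw \<Rightarrow> (nat \<Rightarrow> 'a) \<Rightarrow> bool" where
  "is_word A w \<longleftrightarrow> (\<forall>i. w i \<in> alph A)"

definition is_run :: "('a, 'q) tncw \<Rightarrow> 'q \<Rightarrow> (nat \<Rightarrow> 'a) \<Rightarrow> (nat \<Rightarrow> 'q) \<Rightarrow> bool" where
  "is_run A q w r \<longleftrightarrow> r 0 = q \<and> (\<forall>i. (r i, w i, r (Suc i)) \<in> trans A)"

definition accepting :: "('a, 'q) tncw \<Rightarrow> (nat \<Rightarrow> 'a) \<Rightarrow> (nat \<Rightarrow> 'q) \<Rightarrow> bool" where
  "accepting A w r \<longleftrightarrow> finite {i. (r i, w i, r (Suc i)) \<in> acc A}"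

definition lang :: "('a, 'q) tncw \<Rightarrow> 'q \<Rightarrow> (nat \<Rightarrow> 'a) set" where
  "lang A q = {w. is_word A w \<and> (\<exists>r. is_run A q w r \<and> accepting A w r)}"

definition lang_safe :: "('a, 'q) tncw \<Rightarrow> 'q \<Rightarrow> (nat \<Rightarrow> 'a) set" where
  "lang_safe A q = {w. is_word A w \<and>
      (\<exists>r. r 0 = q \<and> (\<forall>i. (r i, w i, r (Suc i)) \<in> safe_trans A))}"

definition lequiv :: "('a, 'q) tncw \<Rightarrow> 'q \<Rightarrow> 'q \<Rightarrow> bool" where
  "lequiv A q s \<longleftrightarrow> lang A q = lang A s"

definition strong_equiv :: "('a, 'q) tncw \<Rightarrow> 'q \<Rightarrow> 'q \<Rightarrow> bool" where
  "strong_equiv A q s \<longleftrightarrow> lequiv A q s \<and> lang_safe A q = lang_safe A s"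

definition safe_below :: "('a, 'q) tncw \<Rightarrow> 'q \<Rightarrow> 'q \<Rightarrow> bool" where
  "safe_below A q s \<longleftrightarrow> lequiv A q s \<and> lang_safe A q \<subseteq> lang_safe A s"

definition gfg_from :: "('a, 'q) tncw \<Rightarrow> 'q \<Rightarrow> bool" where
  "gfg_from A q \<longleftrightarrow> (\<exists>f :: 'a list \<Rightarrow> 'q.
      f [] = q
      \<and> (\<forall>u \<sigma>. set u \<subseteq> alph A \<and> \<sigma> \<in> alph A \<longrightarrow> (f u, \<sigma>, f (u @ [\<sigma>])) \<in> trans A)
      \<and> (\<forall>w \<in> lang A q. accepting A w (\<lambda>i. f (map w [0..<i]))))"

definition gfg :: "('a, 'q) tncw \<Rightarrow> bool" where
  "gfg A \<longleftrightarrow> gfg_from A (init A)"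

definition sem_det :: "('a, 'q) tncw \<Rightarrow> bool" where
  "sem_det A \<longleftrightarrow> (\<forall>q \<sigma> s s'. (q, \<sigma>, s) \<in> trans A \<and> (q, \<sigma>, s') \<in> trans A \<longrightarrow> lequiv A s s')"

definition safe_det :: "('a, 'q) tncw \<Rightarrow> bool" where
  "safe_det A \<longleftrightarrow> (\<forall>q \<sigma> s s'. s \<in> succ_safe A q \<sigma> \<and> s' \<in> succ_safe A q \<sigma> \<longrightarrow> s = s')"

definition safe_edges :: "('a, 'q) tncw \<Rightarrow> ('q \<times> 'q) set" where
  "safe_edges A = {(q, s). \<exists>\<sigma>. (q, \<sigma>, s) \<in> safe_trans A}"

definition normal :: "('a, 'q) tncw \<Rightarrow> bool" where
  "normal A \<longleftrightarrow> (\<forall>q s. (q, s) \<in> (safe_edges A)\<^sup>* \<longrightarrow> (s, q) \<in> (safe_edges A)\<^sup>*)"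

definition reachable :: "('a, 'q) tncw \<Rightarrow> 'q \<Rightarrow> bool" where
  "reachable A q \<longleftrightarrow> (init A, q) \<in> {(p, s). \<exists>\<sigma>. (p, \<sigma>, s) \<in> trans A}\<^sup>*"

definition nice :: "('a, 'q) tncw \<Rightarrow> bool" where
  "nice A \<longleftrightarrow> (\<forall>q \<in> states A. reachable A q \<and> gfg_from A q)
     \<and> normal A \<and> safe_det A \<and> sem_det A"

definition safe_comps :: "('a, 'q) tncw \<Rightarrow> 'q set set" where
  "safe_comps A = {C. \<exists>q \<in> states A. C = {s \<in> states A.
       (q, s) \<in> (safe_edges A)\<^sup>* \<and> (s, q) \<in> (safe_edges A)\<^sup>*}}"

definition H_rel :: "('a, 'q) tncw \<Rightarrow> 'q set \<Rightarrow> 'q set \<Rightarrow> bool" where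
  "H_rel A S S' \<longleftrightarrow> (\<exists>q \<in> S. \<exists>q' \<in> S'. safe_below A q q')"

definition frontier :: "('a, 'q) tncw \<Rightarrow> 'q set set \<Rightarrow> bool" where
  "frontier A SS \<longleftrightarrow> SS \<subseteq> safe_comps A
     \<and> (\<forall>S \<in> safe_comps A. \<exists>S' \<in> SS. H_rel A S S')
     \<and> (\<forall>S \<in> SS. \<forall>S' \<in> SS. S \<noteq> S' \<longrightarrow> \<not> H_rel A S S' \<and> \<not> H_rel A S' S)"

definition admissible_init :: "('a, 'q) tncw \<Rightarrow> 'q set set \<Rightarrow> 'q \<Rightarrow> bool" where
  "admissible_init A SS q0 \<longleftrightarrow>
     (if init A \<in> \<Union>SS then q0 = init A else q0 \<in> \<Union>SS \<and> safe_below A (init A) q0)"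

definition B_aut :: "('a, 'q) tncw \<Rightarrow> 'q set set \<Rightarrow> 'q \<Rightarrow> ('a, 'q) tncw" where
  "B_aut A SS q0 =
     \<lparr> alph = alph A,
       states = \<Union>SS,
       init = q0,
       trans = {(q, \<sigma>, s). q \<in> \<Union>SS \<and> \<sigma> \<in> alph A \<and> s \<in> succ_safe A q \<sigma>}
             \<union> {(q, \<sigma>, s). q \<in> \<Union>SS \<and> \<sigma> \<in> alph A \<and> succ_safe A q \<sigma> = {} \<and> s \<in> \<Union>SS
                   \<and> (\<exists>q'' \<in> succ_acc A q \<sigma>. lequiv A s q'')},
       acc = {(q, \<sigma>, s). q \<in> \<Union>SS \<and> \<sigma> \<in> alph A \<and> succ_safe A q \<sigma> = {} \<and> s \<in> \<Union>SS
                   \<and> (\<exists>q'' \<in> succ_acc A q \<sigma>. lequiv A s q'')} \<rparr>"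

definition cls :: "('a, 'q) tncw \<Rightarrow> 'q \<Rightarrow> 'q set" where
  "cls B q = {q' \<in> states B. strong_equiv B q q'}"

definition quot_aut :: "('a, 'q) tncw \<Rightarrow> ('a, 'q set) tncw" where
  "quot_aut B =
     \<lparr> alph = alph B,
       states = cls B ` states B,
       init = cls B (init B),
       trans = {(cls B q, \<sigma>, cls B p) | q \<sigma> p. q \<in> states B \<and> p \<in> states B \<and> (q, \<sigma>, p) \<in> trans B},
       acc = {(cls B q, \<sigma>, cls B p) | q \<sigma> p. q \<in> states B \<and> p \<in> states B \<and> (q, \<sigma>, p) \<in> acc B} \<rparr>"

definition alpha_homogenous :: "('a, 'q) tncw \<Rightarrow> bool" where
  "alpha_homogenous A \<longleftrightarrow> (\<forall>q \<sigma>. succ_acc A q \<sigma> = {} \<or> succ_safe A q \<sigma> = {})"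

definition allowed_trans :: "('a, 'q) tncw \<Rightarrow> 'q \<Rightarrow> 'a \<Rightarrow> 'q \<Rightarrow> bool" where
  "allowed_trans A q \<sigma> s \<longleftrightarrow> q \<in> states A \<and> \<sigma> \<in> alph A \<and> s \<in> states A
     \<and> (\<exists>s'. lequiv A s' s \<and> (q, \<sigma>, s') \<in> trans A)"

definition alpha_max_up_to_hom :: "('a, 'q) tncw \<Rightarrow> bool" where
  "alpha_max_up_to_hom A \<longleftrightarrow> alpha_homogenous A
     \<and> (\<forall>q \<in> states A. \<forall>\<sigma> \<in> alph A. succ_safe A q \<sigma> = {} \<longrightarrow>
          (\<forall>s. allowed_trans A q \<sigma> s \<longrightarrow> (q, \<sigma>, s) \<in> trans A))"

end

theory Submission imports Defs begin
locale setting =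
  fixes A :: "('a,'q) tncw" and SS :: "'q set set" and q0 :: 'q
  assumes wf: "wf_tncw A" and nc: "nice A" and fr: "frontier A SS"
begin

abbreviation "B \<equiv> B_aut A SS q0"
abbreviation "U \<equiv> \<Union>SS"
abbreviation "E \<equiv> safe_edges A"

lemma trans_states: "(q,\<sigma>,s) \<in> trans A \<Longrightarrow> q \<in> states A \<and> \<sigma> \<in> alph A \<and> s \<in> states A"
  using wf unfolding wf_tncw_def by blast
lemma acc_trans: "acc A \<subseteq> trans A" using wf unfolding wf_tncw_def by blast
lemma ex_succ: "q \<in> states A \<Longrightarrow> \<sigma> \<in> alph A \<Longrightarrow> \<exists>s. (q,\<sigma>,s) \<in> trans A"
  using wf unfolding wf_tncw_def by blast
lemma safe_tr: "(q,\<sigma>,s) \<in> safe_trans A \<Longrightarrow> (q,\<sigma>,s) \<in> trans A"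
  by (simp add: safe_trans_def)
lemma normalA: "normal A" and sdetA: "safe_det A" and semA: "sem_det A"
  using nc unfolding nice_def by auto

lemma U_states: "U \<subseteq> states A"
  using fr unfolding frontier_def safe_comps_def by blast

lemma closure: assumes "x \<in> U" "(x,\<sigma>,t) \<in> safe_trans A" shows "t \<in> U"
proof -
  obtain S where S: "S \<in> SS" "x \<in> S" using assms by blast
  then have "S \<in> safe_comps A" using fr unfolding frontier_def by blast
  then obtain q where q: "q \<in> states A" "S = {s \<in> states A. (q, s) \<in> E\<^sup>* \<and> (s, q) \<in> E\<^sup>*}"
    unfolding safe_comps_def by blast
  have e: "(x,t) \<in> E" using assms(2) unfolding safe_edges_def by blast
  have ts: "t \<in> states A" using trans_states[OF safe_tr[OF assms(2)]] by blast
  have "(t,x) \<in> E\<^sup>*" using normalA e unfolding normal_def by blast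
  then have "t \<in> S" using q S e ts by (auto intro: rtrancl_into_rtrancl rtrancl_trans)
  then show ?thesis using S by blast
qed

lemma safeB_iff: "(q,\<sigma>,s) \<in> safe_trans B \<longleftrightarrow> q \<in> U \<and> \<sigma> \<in> alph A \<and> s \<in> succ_safe A q \<sigma>"
  unfolding safe_trans_def B_aut_def by auto

lemma accB_iff: "(q,\<sigma>,s) \<in> acc B \<longleftrightarrow> q \<in> U \<and> \<sigma> \<in> alph A \<and> succ_safe A q \<sigma> = {} \<and> s \<in> U
   \<and> (\<exists>q''\<in>succ_acc A q \<sigma>. lequiv A s q'')"
  unfolding B_aut_def by simp

lemma accB_trans: "acc B \<subseteq> trans B" unfolding B_aut_def by auto
lemma safeB_trans: "safe_trans B \<subseteq> trans B" unfolding safe_trans_def by auto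

lemma transB_cases: "(q,\<sigma>,s) \<in> trans B \<Longrightarrow> (q,\<sigma>,s) \<in> safe_trans B \<or> (q,\<sigma>,s) \<in> acc B"
  unfolding safe_trans_def by auto

lemma transB_U: assumes "(q,\<sigma>,s) \<in> trans B" shows "q \<in> U \<and> \<sigma> \<in> alph A \<and> s \<in> U"
  using transB_cases[OF assms] closure unfolding safeB_iff accB_iff succ_safe_def by blast

lemma B_simps[simp]: "states B = U" "alph B = alph A"
  unfolding B_aut_def by simp_all

lemma lang_cons: assumes "(q,\<sigma>,t) \<in> trans A" shows "lang A t = {v. case_nat \<sigma> v \<in> lang A q}"
proof
  have sa: "\<sigma> \<in> alph A" using trans_states[OF assms] by blast
  show "lang A t \<subseteq> {v. case_nat \<sigma> v \<in> lang A q}"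
  proof
    fix v assume "v \<in> lang A t"
    then obtain r where w: "is_word A v" and r: "r 0 = t" "\<forall>i. (r i, v i, r (Suc i)) \<in> trans A"
      and f: "finite {i. (r i, v i, r (Suc i)) \<in> acc A}"
      unfolding lang_def is_run_def accepting_def by blast
    let ?r = "case_nat q r"
    have "is_run A q (case_nat \<sigma> v) ?r" unfolding is_run_def
    proof (intro conjI allI)
      fix i show "(?r i, case_nat \<sigma> v i, ?r (Suc i)) \<in> trans A"
        using r assms by (cases i) auto
    qed simp
    moreover have "{i. (?r i, case_nat \<sigma> v i, ?r (Suc i)) \<in> acc A} \<subseteq> insert 0 (Suc ` {i. (r i, v i, r (Suc i)) \<in> acc A})"
    proof
      fix i assume "i \<in> {i. (?r i, case_nat \<sigma> v i, ?r (Suc i)) \<in> acc A}"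
      then show "i \<in> insert 0 (Suc ` {i. (r i, v i, r (Suc i)) \<in> acc A})" by (cases i) auto
    qed
    then have "finite {i. (?r i, case_nat \<sigma> v i, ?r (Suc i)) \<in> acc A}"
      using f by (meson finite_imageI finite_insert finite_subset)
    moreover have "is_word A (case_nat \<sigma> v)" using w sa unfolding is_word_def
      by (simp split: nat.split)
    ultimately show "v \<in> {v. case_nat \<sigma> v \<in> lang A q}"
      unfolding lang_def accepting_def by blast
  qed
  show "{v. case_nat \<sigma> v \<in> lang A q} \<subseteq> lang A t"
  proof
    fix v assume "v \<in> {v. case_nat \<sigma> v \<in> lang A q}"
    then obtain r where w: "is_word A (case_nat \<sigma> v)" and r: "r 0 = q"
      "\<forall>i. (r i, case_nat \<sigma> v i, r (Suc i)) \<in> trans A"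
      and f: "finite {i. (r i, case_nat \<sigma> v i, r (Suc i)) \<in> acc A}"
      unfolding lang_def is_run_def accepting_def by blast
    have wv: "is_word A v" using w unfolding is_word_def by (metis old.nat.simps(5))
    have r1: "(q, \<sigma>, r 1) \<in> trans A" using r(2)[rule_format, of 0] r(1) by simp
    have run: "is_run A (r 1) v (\<lambda>i. r (Suc i))" unfolding is_run_def
      using r(2) by (metis One_nat_def old.nat.simps(5))
    have eq: "{i. (r (Suc i), v i, r (Suc (Suc i))) \<in> acc A} = Suc -` {i. (r i, case_nat \<sigma> v i, r (Suc i)) \<in> acc A}"
      by auto
    have "finite {i. (r (Suc i), v i, r (Suc (Suc i))) \<in> acc A}"
      unfolding eq by (rule finite_vimageI[OF f inj_Suc])
    then have "v \<in> lang A (r 1)" using run wv unfolding lang_def accepting_def by blast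
    moreover have "lequiv A t (r 1)" using semA assms r1 unfolding sem_det_def by blast
    ultimately show "v \<in> lang A t" unfolding lequiv_def by simp
  qed
qed

lemma lang_safe_cons: assumes "(q,\<sigma>,t) \<in> safe_trans A"
  shows "lang_safe A t = {v. case_nat \<sigma> v \<in> lang_safe A q}"
proof
  have sa: "\<sigma> \<in> alph A" using trans_states[OF safe_tr[OF assms]] by blast
  show "lang_safe A t \<subseteq> {v. case_nat \<sigma> v \<in> lang_safe A q}"
  proof
    fix v assume "v \<in> lang_safe A t"
    then obtain r where w: "is_word A v" and r: "r 0 = t" "\<forall>i. (r i, v i, r (Suc i)) \<in> safe_trans A"
      unfolding lang_safe_def by blast
    let ?r = "case_nat q r"
    have X: "\<forall>i. (?r i, case_nat \<sigma> v i, ?r (Suc i)) \<in> safe_trans A"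
    proof
      fix i show "(?r i, case_nat \<sigma> v i, ?r (Suc i)) \<in> safe_trans A"
        using r assms by (cases i) auto
    qed
    have Y: "is_word A (case_nat \<sigma> v)" using w sa unfolding is_word_def
      by (simp split: nat.split)
    have Z: "?r 0 = q" by simp
    have "case_nat \<sigma> v \<in> lang_safe A q"
      unfolding lang_safe_def using X Y Z by blast
    then show "v \<in> {v. case_nat \<sigma> v \<in> lang_safe A q}" by simp
  qed
  show "{v. case_nat \<sigma> v \<in> lang_safe A q} \<subseteq> lang_safe A t"
  proof
    fix v assume "v \<in> {v. case_nat \<sigma> v \<in> lang_safe A q}"
    then obtain r where w: "is_word A (case_nat \<sigma> v)" and r: "r 0 = q"
      "\<forall>i. (r i, case_nat \<sigma> v i, r (Suc i)) \<in> safe_trans A"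
      unfolding lang_safe_def by blast
    have wv: "is_word A v" using w unfolding is_word_def by (metis old.nat.simps(5))
    have r1: "(q, \<sigma>, r 1) \<in> safe_trans A" using r(2)[rule_format, of 0] r(1) by simp
    have rt: "r (Suc 0) = t" using sdetA r1 assms unfolding safe_det_def succ_safe_def
      by (metis One_nat_def mem_Collect_eq)
    have "\<forall>i. (r (Suc i), v i, r (Suc (Suc i))) \<in> safe_trans A"
    proof
      fix i show "(r (Suc i), v i, r (Suc (Suc i))) \<in> safe_trans A"
        using r(2)[rule_format, of "Suc i"] by simp
    qed
    then show "v \<in> lang_safe A t" using wv rt unfolding lang_safe_def
      by (intro CollectI conjI exI[of _ "\<lambda>i. r (Suc i)"]) auto
  qed
qed


lemma has_edge_succ: assumes "(z,\<sigma>,z2) \<in> safe_trans A" shows "\<exists>\<sigma>' z3. (z2,\<sigma>',z3) \<in> safe_trans A"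
proof -
  have e: "(z,z2) \<in> E" using assms unfolding safe_edges_def by blast
  then have "(z2,z) \<in> E\<^sup>*" using normalA unfolding normal_def by blast
  then show ?thesis
  proof (cases rule: converse_rtranclE)
    case base then show ?thesis using assms by blast
  next
    case (step y) then show ?thesis unfolding safe_edges_def by blast
  qed
qed

lemma inf_safe: assumes "(y,\<sigma>,y') \<in> safe_trans A" shows "\<exists>w. w \<in> lang_safe A y"
proof -
  define P where "P x \<longleftrightarrow> (\<exists>\<sigma> x'. (x,\<sigma>,x') \<in> safe_trans A)" for x
  define nxt where "nxt x = (SOME p. (x, fst p, snd p) \<in> safe_trans A)" for x
  have nx: "(x, fst (nxt x), snd (nxt x)) \<in> safe_trans A \<and> P (snd (nxt x))" if "P x" for x
  proof -
    have "\<exists>p. (x, fst p, snd p) \<in> safe_trans A" using that unfolding P_def by auto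
    then have "(x, fst (nxt x), snd (nxt x)) \<in> safe_trans A" unfolding nxt_def by (rule someI_ex)
    then show ?thesis using has_edge_succ unfolding P_def by blast
  qed
  define r where "r n = ((\<lambda>x. snd (nxt x)) ^^ n) y" for n
  have r0: "r 0 = y" and rS: "r (Suc n) = snd (nxt (r n))" for n unfolding r_def by simp_all
  have Pr: "P (r n)" for n
  proof (induction n)
    case 0 then show ?case using assms r0 unfolding P_def by blast
  next
    case (Suc n) then show ?case using nx rS by simp
  qed
  define w where "w n = fst (nxt (r n))" for n
  have st: "(r n, w n, r (Suc n)) \<in> safe_trans A" for n using nx[OF Pr[of n]] rS w_def by simp
  have "is_word A w" unfolding is_word_def using st trans_states safe_tr by blast
  then have "w \<in> lang_safe A y" unfolding lang_safe_def using st r0 by blast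
  then show ?thesis by blast
qed

lemma step_below: assumes "safe_below A z z'" "(z,\<sigma>,z2) \<in> safe_trans A"
  shows "\<exists>z2'. (z',\<sigma>,z2') \<in> safe_trans A \<and> safe_below A z2 z2'"
proof -
  obtain v where v: "v \<in> lang_safe A z2" using has_edge_succ[OF assms(2)] inf_safe by blast
  have "case_nat \<sigma> v \<in> lang_safe A z" using v lang_safe_cons[OF assms(2)] by blast
  then have "case_nat \<sigma> v \<in> lang_safe A z'" using assms(1) unfolding safe_below_def by blast
  then obtain r where r: "r 0 = z'" "\<forall>i. (r i, case_nat \<sigma> v i, r (Suc i)) \<in> safe_trans A"
    unfolding lang_safe_def by blast
  have t: "(z', \<sigma>, r (Suc 0)) \<in> safe_trans A" using r(2)[rule_format, of 0] r(1) by simp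
  have "lang A z2 = lang A (r (Suc 0))"
    using lang_cons[OF safe_tr[OF assms(2)]] lang_cons[OF safe_tr[OF t]] assms(1)
    unfolding safe_below_def lequiv_def by simp
  moreover have "lang_safe A z2 \<subseteq> lang_safe A (r (Suc 0))"
    using lang_safe_cons[OF assms(2)] lang_safe_cons[OF t] assms(1)
    unfolding safe_below_def by auto
  ultimately show ?thesis using t unfolding safe_below_def lequiv_def by blast
qed

lemma pick: assumes "x \<in> states A" shows "\<exists>b\<in>U. safe_below A x b"
proof -
  let ?S = "{s \<in> states A. (x, s) \<in> E\<^sup>* \<and> (s, x) \<in> E\<^sup>*}"
  have "?S \<in> safe_comps A" using assms unfolding safe_comps_def by blast
  then obtain S' where S': "S' \<in> SS" "H_rel A ?S S'" using fr unfolding frontier_def by blast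
  then obtain q1 q1' where q: "q1 \<in> ?S" "q1' \<in> S'" "safe_below A q1 q1'"
    unfolding H_rel_def by blast
  have "(q1, x) \<in> E\<^sup>*" using q by blast
  then show ?thesis
  proof (induction rule: rtrancl_induct)
    case base then show ?case using q S' by blast
  next
    case (step z z2)
    then obtain z' where z': "z' \<in> U" "safe_below A z z'" by blast
    obtain \<sigma> where "(z,\<sigma>,z2) \<in> safe_trans A" using step(2) unfolding safe_edges_def by blast
    then obtain z2' where "(z',\<sigma>,z2') \<in> safe_trans A" "safe_below A z2 z2'"
      using step_below z' by blast
    then show ?case using closure z' by blast
  qed
qed


lemma safe_sub_lang: "lang_safe A q \<subseteq> lang A q"
  unfolding lang_safe_def lang_def is_run_def accepting_def safe_trans_def by auto

lemma shift_cons: "case_nat (w i) (\<lambda>n. w (n + Suc i)) = (\<lambda>n. w (n + i))"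
  by (rule ext, case_tac n) auto

lemma transB_res_A: assumes "(q,\<sigma>,t) \<in> trans B" shows "lang A t = {v. case_nat \<sigma> v \<in> lang A q}"
  using transB_cases[OF assms]
proof
  assume "(q,\<sigma>,t) \<in> safe_trans B"
  then have "(q,\<sigma>,t) \<in> safe_trans A" unfolding safeB_iff succ_safe_def by simp
  then show ?thesis by (rule lang_cons[OF safe_tr])
next
  assume "(q,\<sigma>,t) \<in> acc B"
  then obtain q'' where "q'' \<in> succ_acc A q \<sigma>" "lequiv A t q''" unfolding accB_iff by blast
  then show ?thesis using lang_cons[of q \<sigma> q''] acc_trans unfolding succ_acc_def lequiv_def by auto
qed

lemma langB_sub: assumes "x \<in> U" "w \<in> lang B x" shows "w \<in> lang A x"
proof -
  obtain r where w: "is_word A w" and r: "r 0 = x" "\<forall>i. (r i, w i, r (Suc i)) \<in> trans B"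
      and f: "finite {i. (r i, w i, r (Suc i)) \<in> acc B}"
    using assms(2) unfolding lang_def is_run_def accepting_def is_word_def by auto
  obtain k where k: "{i. (r i, w i, r (Suc i)) \<in> acc B} \<subseteq> {..<k}"
    using f unfolding finite_nat_set_iff_bounded by auto
  have sf: "(r i, w i, r (Suc i)) \<in> safe_trans A" if "i \<ge> k" for i
  proof -
    have "(r i, w i, r (Suc i)) \<notin> acc B" using k that by auto
    then have "(r i, w i, r (Suc i)) \<in> safe_trans B" using transB_cases r(2) by blast
    then show ?thesis unfolding safeB_iff succ_safe_def by simp
  qed
  define sh where "sh i = (\<lambda>n. w (n + i))" for i
  have "sh k \<in> lang_safe A (r k)" unfolding lang_safe_def
  proof (intro CollectI conjI exI[of _ "\<lambda>n. r (n + k)"])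
    show "is_word A (sh k)" using w unfolding is_word_def sh_def by simp
    show "\<forall>i. ((\<lambda>n. r (n + k)) i, sh k i, (\<lambda>n. r (n + k)) (Suc i)) \<in> safe_trans A"
      using sf unfolding sh_def by simp
  qed simp
  then have base: "sh k \<in> lang A (r k)" using safe_sub_lang by blast
  have "sh 0 \<in> lang A (r 0)"
  proof (rule inc_induct[of 0 k])
    show "sh k \<in> lang A (r k)" by (rule base)
  next
    fix n assume "n < k" "sh (Suc n) \<in> lang A (r (Suc n))"
    then have "case_nat (w n) (sh (Suc n)) \<in> lang A (r n)"
      using transB_res_A r(2) by blast
    then show "sh n \<in> lang A (r n)" using shift_cons[of w n] unfolding sh_def by simp
  qed simp
  then show ?thesis using r(1) unfolding sh_def by simp
qed

lemma the_safe: "s \<in> succ_safe A q \<sigma> \<Longrightarrow> (THE s. s \<in> succ_safe A q \<sigma>) = s"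
  using sdetA unfolding safe_det_def by blast

lemma langA_sub: assumes "x \<in> U" "w \<in> lang A x" shows "w \<in> lang B x"
proof -
  obtain r where w: "is_word A w" and r: "r 0 = x" "\<forall>i. (r i, w i, r (Suc i)) \<in> trans A"
      and f: "finite {i. (r i, w i, r (Suc i)) \<in> acc A}"
    using assms(2) unfolding lang_def is_run_def accepting_def by auto
  obtain k where k: "{i. (r i, w i, r (Suc i)) \<in> acc A} \<subseteq> {..<k}"
    using f unfolding finite_nat_set_iff_bounded by auto
  have sf: "(r i, w i, r (Suc i)) \<in> safe_trans A" if "i \<ge> k" for i
    using k that r(2) unfolding safe_trans_def by auto
  have rs: "r i \<in> states A" for i using r(2) trans_states by blast
  have wa: "w i \<in> alph A" for i using w unfolding is_word_def by blast
  define pk where "pk y = (SOME b. b \<in> U \<and> safe_below A y b)" for y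
  have pk: "pk y \<in> U \<and> safe_below A y (pk y)" if "y \<in> states A" for y
    unfolding pk_def using pick[OF that] by (metis (mono_tags, lifting) someI_ex)
  define g where "g = rec_nat x (\<lambda>i gi. if succ_safe A gi (w i) \<noteq> {}
      then (THE s. s \<in> succ_safe A gi (w i)) else pk (r (Suc i)))"
  have g0: "g 0 = x" unfolding g_def by simp
  have gS: "g (Suc i) = (if succ_safe A (g i) (w i) \<noteq> {}
      then (THE s. s \<in> succ_safe A (g i) (w i)) else pk (r (Suc i)))" for i
    unfolding g_def by simp
  have inv: "g i \<in> U \<and> lang A (g i) = lang A (r i)" for i
  proof (induction i)
    case 0 then show ?case using g0 r(1) assms(1) by simp
  next
    case (Suc i)
    show ?case
    proof (cases "succ_safe A (g i) (w i) = {}")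
      case True
      then show ?thesis using gS[of i] pk[OF rs[of "Suc i"]] unfolding safe_below_def lequiv_def by simp
    next
      case False
      then obtain s where s: "s \<in> succ_safe A (g i) (w i)" by blast
      then have gs: "g (Suc i) = s" using gS[of i] the_safe by auto
      have st: "(g i, w i, s) \<in> safe_trans A" using s unfolding succ_safe_def by simp
      have "s \<in> U" using closure st Suc.IH by blast
      moreover have "lang A s = lang A (r (Suc i))"
        using lang_cons[OF safe_tr[OF st]] lang_cons[of "r i" "w i" "r (Suc i)"] r(2) Suc.IH by simp
      ultimately show ?thesis using gs by simp
    qed
  qed
  have tr: "(g i, w i, g (Suc i)) \<in> trans B" for i
  proof (cases "succ_safe A (g i) (w i) = {}")
    case False
    then obtain s where s: "s \<in> succ_safe A (g i) (w i)" by blast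
    then have gs: "g (Suc i) = s" using gS[of i] the_safe by auto
    then show ?thesis using s inv[of i] wa[of i] unfolding B_aut_def by simp
  next
    case True
    have gU: "g i \<in> states A" using inv[of i] U_states by blast
    obtain q'' where q'': "(g i, w i, q'') \<in> trans A" using ex_succ[OF gU wa] by blast
    then have qa: "q'' \<in> succ_acc A (g i) (w i)"
      using True unfolding succ_acc_def succ_safe_def safe_trans_def by blast
    have gs: "g (Suc i) = pk (r (Suc i))" using gS[of i] True by simp
    have "lang A (pk (r (Suc i))) = lang A q''"
      using pk[OF rs[of "Suc i"]] lang_cons[OF q''] lang_cons[of "r i" "w i" "r (Suc i)"] r(2) inv[of i]
      unfolding safe_below_def lequiv_def by simp
    then have "(g i, w i, g (Suc i)) \<in> acc B"
      unfolding accB_iff gs lequiv_def using inv[of i] wa[of i] True pk[OF rs[of "Suc i"]] qa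
      by blast
    then show ?thesis using accB_trans by blast
  qed
  define sh where "sh i = (\<lambda>n. w (n + i))" for i
  have adv: "succ_safe A (g j) (w j) \<noteq> {} \<and> sh (Suc j) \<in> lang_safe A (g (Suc j))"
    if js: "sh j \<in> lang_safe A (g j)" for j
  proof -
    obtain s0 where s0: "s0 0 = g j" "\<forall>i. (s0 i, sh j i, s0 (Suc i)) \<in> safe_trans A"
      using js unfolding lang_safe_def by blast
    have st: "(g j, w j, s0 1) \<in> safe_trans A" using s0(2)[rule_format, of 0] s0(1)
      unfolding sh_def by (simp add: One_nat_def)
    then have ss: "s0 1 \<in> succ_safe A (g j) (w j)" unfolding succ_safe_def by simp
    then have gs: "g (Suc j) = s0 1" using gS[of j] the_safe by auto
    have "case_nat (w j) (sh (Suc j)) \<in> lang_safe A (g j)"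
      using js shift_cons[of w j] unfolding sh_def by simp
    then have "sh (Suc j) \<in> lang_safe A (s0 1)" using lang_safe_cons[OF st] by blast
    then show ?thesis using ss gs by auto
  qed
  have key: "\<forall>j>i. succ_safe A (g j) (w j) \<noteq> {}"
    if "i \<ge> k" "succ_safe A (g i) (w i) = {}" for i
  proof -
    have "sh (Suc i) \<in> lang_safe A (r (Suc i))" unfolding lang_safe_def
    proof (intro CollectI conjI exI[of _ "\<lambda>n. r (n + Suc i)"])
      show "is_word A (sh (Suc i))" using w unfolding is_word_def sh_def by simp
      show "\<forall>n. ((\<lambda>n. r (n + Suc i)) n, sh (Suc i) n, (\<lambda>n. r (n + Suc i)) (Suc n)) \<in> safe_trans A"
        using sf that(1) unfolding sh_def by simp
    qed simp
    moreover have "g (Suc i) = pk (r (Suc i))" using gS[of i] that(2) by simp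
    ultimately have s1: "sh (Suc i) \<in> lang_safe A (g (Suc i))"
      using pk[OF rs[of "Suc i"]] unfolding safe_below_def by auto
    have "sh (Suc i + d) \<in> lang_safe A (g (Suc i + d))" for d
    proof (induction d)
      case 0 then show ?case using s1 by simp
    next
      case (Suc d) then show ?case using adv by simp
    qed
    then have nz: "succ_safe A (g (Suc i + d)) (w (Suc i + d)) \<noteq> {}" for d using adv by blast
    show ?thesis
    proof (intro allI impI)
      fix j assume "j > i"
      then obtain d where "j = Suc (i + d)" using less_imp_Suc_add by blast
      then show "succ_safe A (g j) (w j) \<noteq> {}" using nz[of d] by simp
    qed
  qed
  let ?J = "{i. succ_safe A (g i) (w i) = {}}"
  have "finite ?J"
  proof (cases "\<exists>i\<ge>k. i \<in> ?J")
    case True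
    then obtain i where "i \<ge> k" "i \<in> ?J" by blast
    have "?J \<subseteq> {..i}"
    proof
      fix j assume "j \<in> ?J"
      then have "\<not> j > i" using key \<open>i \<ge> k\<close> \<open>i \<in> ?J\<close> by blast
      then show "j \<in> {..i}" by simp
    qed
    then show ?thesis using finite_subset by blast
  next
    case False
    then have "?J \<subseteq> {..<k}" using not_le by auto
    then show ?thesis using finite_subset by blast
  qed
  moreover have "{i. (g i, w i, g (Suc i)) \<in> acc B} \<subseteq> ?J" unfolding accB_iff by blast
  ultimately have "finite {i. (g i, w i, g (Suc i)) \<in> acc B}" using finite_subset by blast
  then show ?thesis using tr g0 w unfolding lang_def is_run_def accepting_def is_word_def by auto
qed

lemma langB_eq: "x \<in> U \<Longrightarrow> lang B x = lang A x"
  using langA_sub langB_sub by blast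


lemma langsafeB_eq: assumes "x \<in> U" shows "lang_safe B x = lang_safe A x"
proof
  show "lang_safe B x \<subseteq> lang_safe A x"
    unfolding lang_safe_def is_word_def safeB_iff succ_safe_def by auto
  show "lang_safe A x \<subseteq> lang_safe B x"
  proof
    fix w assume "w \<in> lang_safe A x"
    then obtain r where w: "is_word A w" and r: "r 0 = x" "\<forall>i. (r i, w i, r (Suc i)) \<in> safe_trans A"
      unfolding lang_safe_def by blast
    have rU: "r i \<in> U" for i
    proof (induction i)
      case 0 then show ?case using r(1) assms by simp
    next
      case (Suc i) then show ?case using closure r(2) by blast
    qed
    have "\<forall>i. (r i, w i, r (Suc i)) \<in> safe_trans B"
      unfolding safeB_iff succ_safe_def using rU r(2) w unfolding is_word_def by simp
    then show "w \<in> lang_safe B x" using r(1) w unfolding lang_safe_def is_word_def by auto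
  qed
qed

lemma resB: assumes "(q,\<sigma>,t) \<in> trans B" shows "lang B t = {v. case_nat \<sigma> v \<in> lang B q}"
  using transB_U[OF assms] langB_eq transB_res_A[OF assms] by simp

lemma safeB_A: "(q,\<sigma>,t) \<in> safe_trans B \<Longrightarrow> (q,\<sigma>,t) \<in> safe_trans A"
  unfolding safeB_iff succ_safe_def by simp

lemma resB_safe: assumes "(q,\<sigma>,t) \<in> safe_trans B"
  shows "lang_safe B t = {v. case_nat \<sigma> v \<in> lang_safe B q}"
proof -
  have q: "q \<in> U" using assms unfolding safeB_iff by simp
  have t: "t \<in> U" using closure[OF q safeB_A[OF assms]] .
  show ?thesis using langsafeB_eq[OF q] langsafeB_eq[OF t] lang_safe_cons[OF safeB_A[OF assms]]
    by simp
qed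

lemma avail: assumes "lang_safe B q \<subseteq> lang_safe B q'" "(q,\<sigma>,t) \<in> safe_trans B"
  shows "\<exists>t'. (q',\<sigma>,t') \<in> safe_trans B"
proof -
  have tA: "(q,\<sigma>,t) \<in> safe_trans A" using safeB_A[OF assms(2)] .
  have q: "q \<in> U" using assms(2) unfolding safeB_iff by simp
  have t: "t \<in> U" using closure[OF q tA] .
  obtain v where "v \<in> lang_safe A t" using has_edge_succ[OF tA] inf_safe by blast
  then have "v \<in> lang_safe B t" using langsafeB_eq[OF t] by simp
  then have "case_nat \<sigma> v \<in> lang_safe B q" using resB_safe[OF assms(2)] by blast
  then have "case_nat \<sigma> v \<in> lang_safe B q'" using assms(1) by blast
  then obtain r where r: "r 0 = q'" "\<forall>i. (r i, case_nat \<sigma> v i, r (Suc i)) \<in> safe_trans B"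
    unfolding lang_safe_def by blast
  then have "(q', \<sigma>, r (Suc 0)) \<in> safe_trans B" using r(2)[rule_format, of 0] by simp
  then show ?thesis by blast
qed

lemma se_refl: "strong_equiv B x x" unfolding strong_equiv_def lequiv_def by simp

lemma transfer: assumes "strong_equiv B q q'" "(q',\<sigma>,p') \<in> trans B" "q \<in> U"
  shows "\<exists>p''. (q,\<sigma>,p'') \<in> trans B \<and> strong_equiv B p'' p'"
  using transB_cases[OF assms(2)]
proof
  assume sp: "(q',\<sigma>,p') \<in> safe_trans B"
  then obtain p'' where p'': "(q,\<sigma>,p'') \<in> safe_trans B"
    using avail[of q' q] assms(1) unfolding strong_equiv_def by blast
  have "lang B p'' = lang B p'"
    using resB[OF subsetD[OF safeB_trans p'']] resB[OF subsetD[OF safeB_trans sp]] assms(1)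
    unfolding strong_equiv_def lequiv_def by simp
  moreover have "lang_safe B p'' = lang_safe B p'"
    using resB_safe[OF p''] resB_safe[OF sp] assms(1)
    unfolding strong_equiv_def by simp
  ultimately show ?thesis using p'' safeB_trans unfolding strong_equiv_def lequiv_def by blast
next
  assume ap: "(q',\<sigma>,p') \<in> acc B"
  then obtain q'' where q'U: "q' \<in> U" and sa: "\<sigma> \<in> alph A" and e: "succ_safe A q' \<sigma> = {}"
    and p'U: "p' \<in> U" and q'': "q'' \<in> succ_acc A q' \<sigma>" "lequiv A p' q''"
    unfolding accB_iff by blast
  have e2: "succ_safe A q \<sigma> = {}"
  proof (rule ccontr)
    assume "succ_safe A q \<sigma> \<noteq> {}"
    then obtain s where "s \<in> succ_safe A q \<sigma>" by blast
    then have "(q,\<sigma>,s) \<in> safe_trans B" unfolding safeB_iff using assms(3) sa by simp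
    then obtain t' where "(q',\<sigma>,t') \<in> safe_trans B"
      using avail[of q q'] assms(1) unfolding strong_equiv_def by blast
    then show False using e unfolding safeB_iff by blast
  qed
  obtain q3 where q3: "(q,\<sigma>,q3) \<in> trans A" using ex_succ assms(3) U_states sa by blast
  then have q3a: "q3 \<in> succ_acc A q \<sigma>" using e2 unfolding succ_acc_def succ_safe_def safe_trans_def by blast
  have "lang A q = lang A q'" using assms(1) langB_eq assms(3) q'U
    unfolding strong_equiv_def lequiv_def by simp
  then have "lang A p' = lang A q3"
    using q'' lang_cons[of q' \<sigma> q''] lang_cons[OF q3] acc_trans unfolding succ_acc_def lequiv_def
    by auto
  then have "(q,\<sigma>,p') \<in> acc B" unfolding accB_iff lequiv_def using assms(3) sa e2 p'U q3a by blast
  then show ?thesis using accB_trans se_refl by blast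
qed

lemma cls_eq_se: "x \<in> U \<Longrightarrow> cls B x = cls B y \<Longrightarrow> strong_equiv B y x"
  unfolding cls_def using se_refl by auto

lemma se_cls_eq: "strong_equiv B x y \<Longrightarrow> cls B x = cls B y"
  unfolding cls_def strong_equiv_def lequiv_def by auto

abbreviation "C \<equiv> quot_aut B"

lemma C_simps[simp]: "alph C = alph A" "states C = cls B ` U"
  unfolding quot_aut_def by simp_all

lemma transC_iff: "(X,\<sigma>,Y) \<in> trans C \<longleftrightarrow> (\<exists>q p. X = cls B q \<and> Y = cls B p \<and> q \<in> U \<and> p \<in> U \<and> (q,\<sigma>,p) \<in> trans B)"
  unfolding quot_aut_def by auto

lemma accC_iff: "(X,\<sigma>,Y) \<in> acc C \<longleftrightarrow> (\<exists>q p. X = cls B q \<and> Y = cls B p \<and> q \<in> U \<and> p \<in> U \<and> (q,\<sigma>,p) \<in> acc B)"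
  unfolding quot_aut_def by auto

lemma langC_sub: assumes "p \<in> U" "w \<in> lang C (cls B p)" shows "w \<in> lang B p"
proof -
  obtain R where w: "is_word A w" and R: "R 0 = cls B p" "\<forall>i. (R i, w i, R (Suc i)) \<in> trans C"
      and f: "finite {i. (R i, w i, R (Suc i)) \<in> acc C}"
    using assms(2) unfolding lang_def is_run_def accepting_def is_word_def by auto
  have stp: "\<exists>y'. (y, w i, y') \<in> trans B \<and> cls B y' = R (Suc i)" if yh: "y \<in> U" "cls B y = R i" for y i
  proof -
    obtain q' p' where qp: "R i = cls B q'" "R (Suc i) = cls B p'" "q' \<in> U" "p' \<in> U" "(q',w i,p') \<in> trans B"
      using R(2) unfolding transC_iff by blast
    have "strong_equiv B y q'" using cls_eq_se[of q' y] qp yh by simp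
    then obtain p'' where "(y, w i, p'') \<in> trans B" "strong_equiv B p'' p'"
      using transfer qp yh by blast
    then show ?thesis using se_cls_eq qp by blast
  qed
  define x where "x = rec_nat p (\<lambda>i xi. SOME y'. (xi, w i, y') \<in> trans B \<and> cls B y' = R (Suc i))"
  have x0: "x 0 = p" unfolding x_def by simp
  have xS: "x (Suc i) = (SOME y'. (x i, w i, y') \<in> trans B \<and> cls B y' = R (Suc i))" for i
    unfolding x_def by simp
  have inv: "x i \<in> U \<and> cls B (x i) = R i" for i
  proof (induction i)
    case 0 then show ?case using x0 R(1) assms(1) by simp
  next
    case (Suc i)
    have "(x i, w i, x (Suc i)) \<in> trans B \<and> cls B (x (Suc i)) = R (Suc i)"
      unfolding xS using someI_ex[OF stp[OF Suc.IH[THEN conjunct1] Suc.IH[THEN conjunct2]]] .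
    then show ?case using transB_U by blast
  qed
  have tr: "(x i, w i, x (Suc i)) \<in> trans B" for i
    unfolding xS using someI_ex[OF stp[OF inv[of i, THEN conjunct1] inv[of i, THEN conjunct2]]] by blast
  have "{i. (x i, w i, x (Suc i)) \<in> acc B} \<subseteq> {i. (R i, w i, R (Suc i)) \<in> acc C}"
  proof
    fix i assume "i \<in> {i. (x i, w i, x (Suc i)) \<in> acc B}"
    then show "i \<in> {i. (R i, w i, R (Suc i)) \<in> acc C}"
      unfolding accC_iff using inv[of i] inv[of "Suc i"] by auto
  qed
  then have "finite {i. (x i, w i, x (Suc i)) \<in> acc B}" using f finite_subset by blast
  then show ?thesis using tr x0 w unfolding lang_def is_run_def accepting_def is_word_def by auto
qed

lemma langB_subC: assumes "p \<in> U" "w \<in> lang B p" shows "w \<in> lang C (cls B p)"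
proof -
  obtain r where w: "is_word A w" and r: "r 0 = p" "\<forall>i. (r i, w i, r (Suc i)) \<in> trans B"
      and f: "finite {i. (r i, w i, r (Suc i)) \<in> acc B}"
    using assms(2) unfolding lang_def is_run_def accepting_def is_word_def by auto
  have rU: "r i \<in> U" for i using r(2) transB_U by blast
  have tr: "(cls B (r i), w i, cls B (r (Suc i))) \<in> trans C" for i
    unfolding transC_iff using rU r(2) by blast
  have "{i. (cls B (r i), w i, cls B (r (Suc i))) \<in> acc C} \<subseteq> {i. (r i, w i, r (Suc i)) \<in> acc B}"
  proof
    fix i assume "i \<in> {i. (cls B (r i), w i, cls B (r (Suc i))) \<in> acc C}"
    then obtain q1 p1 where q1: "cls B (r i) = cls B q1" "q1 \<in> U" "(q1, w i, p1) \<in> acc B"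
      unfolding accC_iff by blast
    show "i \<in> {i. (r i, w i, r (Suc i)) \<in> acc B}"
    proof (rule ccontr)
      assume "i \<notin> {i. (r i, w i, r (Suc i)) \<in> acc B}"
      then have "(r i, w i, r (Suc i)) \<in> safe_trans B" using r(2) unfolding safe_trans_def by auto
      moreover have "strong_equiv B q1 (r i)" using cls_eq_se[of "r i" q1] rU q1 by simp
      ultimately obtain t' where "(q1, w i, t') \<in> safe_trans B"
        using avail[of "r i" q1] unfolding strong_equiv_def by blast
      then show False using q1(3) unfolding safeB_iff accB_iff by blast
    qed
  qed
  then have "finite {i. (cls B (r i), w i, cls B (r (Suc i))) \<in> acc C}" using f finite_subset by blast
  then show ?thesis using tr r(1) w unfolding lang_def is_run_def accepting_def is_word_def
    by (intro CollectI conjI exI[of _ "\<lambda>i. cls B (r i)"]) auto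
qed

lemma langC_eq: "p \<in> U \<Longrightarrow> lang C (cls B p) = lang A p"
  using langC_sub langB_subC langB_eq by blast

lemma main: "alpha_max_up_to_hom C"
  unfolding alpha_max_up_to_hom_def
proof (intro conjI)
  show "alpha_homogenous C" unfolding alpha_homogenous_def
  proof (intro allI)
    fix X \<sigma>
    show "succ_acc C X \<sigma> = {} \<or> succ_safe C X \<sigma> = {}"
    proof (rule ccontr)
      assume "\<not> ?thesis"
      then obtain Y1 Y2 where y: "(X,\<sigma>,Y1) \<in> acc C" "(X,\<sigma>,Y2) \<in> trans C" "(X,\<sigma>,Y2) \<notin> acc C"
        unfolding succ_acc_def succ_safe_def safe_trans_def by blast
      obtain q1 p1 where a: "X = cls B q1" "q1 \<in> U" "(q1,\<sigma>,p1) \<in> acc B"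
        using y(1) unfolding accC_iff by blast
      obtain q2 p2 where b: "X = cls B q2" "Y2 = cls B p2" "q2 \<in> U" "p2 \<in> U" "(q2,\<sigma>,p2) \<in> trans B"
        using y(2) unfolding transC_iff by blast
      have "(q2,\<sigma>,p2) \<notin> acc B" using y(3) b unfolding accC_iff by blast
      then have "(q2,\<sigma>,p2) \<in> safe_trans B" using b(5) unfolding safe_trans_def by blast
      moreover have "strong_equiv B q1 q2" using cls_eq_se[of q2 q1] a b by simp
      ultimately obtain t' where "(q1,\<sigma>,t') \<in> safe_trans B"
        using avail[of q2 q1] unfolding strong_equiv_def by blast
      then show False using a(3) unfolding safeB_iff accB_iff by blast
    qed
  qed
  show "\<forall>X\<in>states C. \<forall>\<sigma>\<in>alph C. succ_safe C X \<sigma> = {} \<longrightarrow>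
          (\<forall>Y. allowed_trans C X \<sigma> Y \<longrightarrow> (X, \<sigma>, Y) \<in> trans C)"
  proof (intro ballI impI allI)
    fix X \<sigma> Y
    assume "succ_safe C X \<sigma> = {}" and al: "allowed_trans C X \<sigma> Y"
    then obtain Y' where y: "lequiv C Y' Y" "(X,\<sigma>,Y') \<in> trans C" and yS: "Y \<in> states C"
      unfolding allowed_trans_def by blast
    have "(X,\<sigma>,Y') \<in> acc C" using y(2) \<open>succ_safe C X \<sigma> = {}\<close>
      unfolding succ_safe_def safe_trans_def by blast
    then obtain q1 p1 where a: "X = cls B q1" "Y' = cls B p1" "q1 \<in> U" "p1 \<in> U" "(q1,\<sigma>,p1) \<in> acc B"
      unfolding accC_iff by blast
    obtain p where p: "Y = cls B p" "p \<in> U" using yS by auto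
    obtain q'' where q'': "q1 \<in> U" "\<sigma> \<in> alph A" "succ_safe A q1 \<sigma> = {}" "q'' \<in> succ_acc A q1 \<sigma>"
      "lequiv A p1 q''"
      using a(5) unfolding accB_iff by blast
    have "lang A p = lang A p1" using langC_eq[OF p(2)] langC_eq[OF a(4)] y(1) a p
      unfolding lequiv_def by simp
    then have "(q1,\<sigma>,p) \<in> acc B" unfolding accB_iff using q'' p unfolding lequiv_def by auto
    then show "(X,\<sigma>,Y) \<in> trans C" unfolding transC_iff using a p accB_trans by blast
  qed
qed

end

theorem mainTheorem5:
  fixes A :: "('a, 'q) tncw" and SS :: "'q set set" and q0 :: 'q
  assumes "wf_tncw A"
    and "gfg A"
    and "nice A"
    and "frontier A SS"
    and "admissible_init A SS q0"
  shows "alpha_max_up_to_hom (quot_aut (B_aut A SS q0))"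
proof -
  interpret setting A SS q0 using assms by unfold_locales
  show ?thesis by (rule main)
qed

end
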